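(* Let ${\bf A}=(a(i,j))_{1\le i,j\le n}$ be a real $n\times n$ matrix with no zero row, and let ${\bf A}_{\rm sde}$ and $|\tilde{\bf A}|$ be the matrices associated with ${\bf A}$ as defined below. Then for every nonzero complex number $\lambda$, the algebraic multiplicity of $\lambda$ as an eigenvalue of ${\bf A}_{\rm sde}$ equals the algebraic multiplicity of $\lambda$ as an eigenvalue of $|\tilde{\bf A}|$ (with multiplicity $0$ meaning $\lambda$ is not an eigenvalue).
   Context: For a real number $t$, $t_+=\max(t,0)$. Define $w_i=\big(\sum_{j=1}^n |a(i,j)|\big)^{-1}$, $1\le i\le n$, and $\tilde a(i,j)=w_i\,a(i,j)$. Let $|\tilde{\bf A}|=(|\tilde a(i,j)|)_{1\le i,j\le n}$ (an $n\times n$ row stochastic matrix), $\tilde{\bf A}_+=\big((\tilde a(i,j))_+\big)_{i,j}$, $\tilde{\bf A}_-=\big((-\tilde a(i,j))_+\big)_{i,j}$, and $${\bf A}_{\rm sde}=\begin{pmatrix}\tilde{\bf A}_+ & \tilde{\bf A}_-\\ \tilde{\bf A}_+ & \tilde{\bf A}_-\end{pmatrix}\in\mathbb{R}^{2n\times 2n}.$$ *)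

theory Defs
  imports "Jordan_Normal_Form.Matrix" "Jordan_Normal_Form.Char_Poly"
begin

definition row_weight :: "real mat \<Rightarrow> nat \<Rightarrow> real" where
  "row_weight A i = inverse (\<Sum>j<dim_col A. \<bar>A $$ (i,j)\<bar>)"

definition tilde_mat :: "real mat \<Rightarrow> real mat" where
  "tilde_mat A = mat (dim_row A) (dim_col A) (\<lambda>(i,j). row_weight A i * A $$ (i,j))"

definition abs_tilde_mat :: "real mat \<Rightarrow> real mat" where
  "abs_tilde_mat A = map_mat abs (tilde_mat A)"

definition tilde_pos :: "real mat \<Rightarrow> real mat" where
  "tilde_pos A = map_mat (\<lambda>t. max t 0) (tilde_mat A)"

definition tilde_neg :: "real mat \<Rightarrow> real mat" where
  "tilde_neg A = map_mat (\<lambda>t. max (- t) 0) (tilde_mat A)"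

definition A_sde :: "real mat \<Rightarrow> real mat" where
  "A_sde A = four_block_mat (tilde_pos A) (tilde_neg A) (tilde_pos A) (tilde_neg A)"

definition alg_mult :: "complex mat \<Rightarrow> complex \<Rightarrow> nat" where
  "alg_mult M x = order x (char_poly M)"

end

theory Submission
  imports Defs
begin

lemma key_char_poly:
  fixes P N :: "'a :: field mat"
  assumes P: "P \<in> carrier_mat n n" and N: "N \<in> carrier_mat n n"
  shows "char_poly (four_block_mat P N P N) = [:0,1:]^n * char_poly (P + N)"
proof -
  define S :: "'a mat" where "S = four_block_mat (1\<^sub>m n) (0\<^sub>m n n) (1\<^sub>m n) (1\<^sub>m n)"
  define Si :: "'a mat" where "Si = four_block_mat (1\<^sub>m n) (0\<^sub>m n n) (- 1\<^sub>m n) (1\<^sub>m n)"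
  define M where "M = four_block_mat P N P N"
  define M' where "M' = four_block_mat (P + N) N (0\<^sub>m n n) (0\<^sub>m n n)"
  have SSi: "S * Si = 1\<^sub>m (n+n)" unfolding S_def Si_def
    by (subst mult_four_block_mat[of _ n n], auto, (rule eq_matI, auto)+)
  have SiS: "Si * S = 1\<^sub>m (n+n)" unfolding S_def Si_def
    by (subst mult_four_block_mat[of _ n n], auto, (rule eq_matI, auto)+)
  have MS: "M * S = four_block_mat (P + N) N (P + N) N" unfolding S_def M_def
    using P N by (subst mult_four_block_mat[OF P N P N one_carrier_mat zero_carrier_mat one_carrier_mat one_carrier_mat], auto)
  have "Si * (M * S) = M'" unfolding MS Si_def M'_def
    using P N by (subst mult_four_block_mat[OF one_carrier_mat zero_carrier_mat uminus_carrier_mat[OF one_carrier_mat] one_carrier_mat add_carrier_mat[OF N] N add_carrier_mat[OF N] N], auto)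
  hence eq: "M' = Si * M * S"
    using P N unfolding S_def Si_def M_def by (subst assoc_mult_mat[of _ "n+n" "n+n"], auto)
  have "similar_mat_wit M' M Si S"
    unfolding similar_mat_wit_def Let_def using SSi SiS eq P N
    by (auto simp: M'_def M_def S_def Si_def)
  hence "char_poly M = char_poly M'"
    by (intro char_poly_similar[symmetric], auto simp: similar_mat_def)
  also have "char_poly_matrix M' = four_block_mat (char_poly_matrix (P + N)) (map_mat (\<lambda>a. [:-a:]) N)
     (0\<^sub>m n n) ([:0,1:] \<cdot>\<^sub>m 1\<^sub>m n)"
    using P N unfolding M'_def char_poly_matrix_def
    by (intro eq_matI, auto)
  hence "char_poly M' = char_poly (P + N) * [:0,1:]^n"
    unfolding char_poly_def using P N
    by (simp, subst det_four_block_mat_lower_left_zero[of _ n _ n], auto)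
  finally show ?thesis unfolding M_def by (simp add: mult.commute)
qed

theorem proposition2:
  fixes A :: "real mat" and n :: nat
  assumes "A \<in> carrier_mat n n"
    and "\<forall>i<n. \<exists>j<n. A $$ (i,j) \<noteq> 0"
  shows "\<forall>x::complex. x \<noteq> 0 \<longrightarrow>
    alg_mult (map_mat complex_of_real (A_sde A)) x =
    alg_mult (map_mat complex_of_real (abs_tilde_mat A)) x"
proof (intro allI impI)
  fix x :: complex assume x: "x \<noteq> 0"
  have T: "tilde_mat A \<in> carrier_mat n n" using assms(1) by (auto simp: tilde_mat_def)
  define P where "P = map_mat complex_of_real (tilde_pos A)"
  define N where "N = map_mat complex_of_real (tilde_neg A)"
  have PC: "P \<in> carrier_mat n n" "N \<in> carrier_mat n n" using T
    by (auto simp: P_def N_def tilde_pos_def tilde_neg_def)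
  have sde: "map_mat complex_of_real (A_sde A) = four_block_mat P N P N"
    unfolding A_sde_def P_def N_def using T
    by (subst map_four_block_mat[of _ n n], auto simp: tilde_pos_def tilde_neg_def)
  have ab: "P + N = map_mat complex_of_real (abs_tilde_mat A)"
    unfolding P_def N_def abs_tilde_mat_def tilde_pos_def tilde_neg_def using T
    by (intro eq_matI, auto simp: max_def)
  have cp: "char_poly (map_mat complex_of_real (A_sde A)) =
     [:0,1:]^n * char_poly (map_mat complex_of_real (abs_tilde_mat A))"
    unfolding sde ab[symmetric] by (rule key_char_poly[OF PC])
  have nz: "char_poly (map_mat complex_of_real (abs_tilde_mat A)) \<noteq> 0"
    using degree_monic_char_poly[of "map_mat complex_of_real (abs_tilde_mat A)" n] T
    by (auto simp: abs_tilde_mat_def)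
  have o0: "order x ([:0,1:]^n) = 0" using x by (intro order_0I, simp)
  show "alg_mult (map_mat complex_of_real (A_sde A)) x =
    alg_mult (map_mat complex_of_real (abs_tilde_mat A)) x"
    unfolding alg_mult_def cp using nz o0 by (subst order_mult, auto)
qed

end
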